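(* Let $w$ be a function on pairs $(T,S)$ of equal-size subsets of $[n]$ with values in $\mathbb{R}\cup\{-\infty\}$ satisfying properties (i)–(v) below, such that $F(S)=w(\{1,\dots,|S|\},S)$ is submodular. Then $w(j,k)\ge w(j+1,k)$ for all $j,k$ with $1\le j<n$ and $1\le k\le n$.
   Context: Notation: $w(i,j)=w(\{i\},\{j\})$; $Ss=S\cup\{s\}$; an interval is a set of consecutive integers. For $S,T\in\binom{[n]}{k}$, $T=\{t_1<\dots<t_k\}$, $S\preceq T$ means $|\{s\in S:s\le t_j\}|\ge j$ for all $j$; $S\prec T$ means $S\preceq T$, $S\ne T$. Properties: (i) $w(\{1,\dots,|S|\},S)\ne-\infty$ for all $S$. (ii) $w(T,S)=-\infty$ whenever $S\prec T$. (iii) For any interval $I$ with $\max(I)<\min(T\cup S)$, $w(I\cup T,I\cup S)=\sum_{i\in I}w(i,i)+w(T,S)$. (iv) If $t,s>\max(S\cup T)$ then $w(Tt,Ss)=w(T,S)+w(t,s)$. (v) For fixed $S$, $|S|=k$, and any $R$ with $|R|=k-2$ and distinct $a,b,c,d\notin R$, the maximum of $w(R\cup\{a,b\},S)+w(R\cup\{c,d\},S)$, $w(R\cup\{a,c\},S)+w(R\cup\{b,d\},S)$, $w(R\cup\{a,d\},S)+w(R\cup\{b,c\},S)$ is attained at least twice. Submodular: $F(A\cap B)+F(A\cup B)\le F(A)+F(B)$. *)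

theory Defs
  imports "HOL-Library.Extended_Real"
begin

text \<open>Gale order: for T = {t_1 < ... < t_k}, S \<preceq> T iff |{s\<in>S. s \<le> t_j}| \<ge> j for all j.\<close>
definition gale_le :: "nat set \<Rightarrow> nat set \<Rightarrow> bool" where
  "gale_le S T \<longleftrightarrow> card S = card T \<and>
     (\<forall>j\<in>{1..card T}. j \<le> card {s\<in>S. s \<le> sorted_list_of_set T ! (j - 1)})"

definition gale_less :: "nat set \<Rightarrow> nat set \<Rightarrow> bool" where
  "gale_less S T \<longleftrightarrow> gale_le S T \<and> S \<noteq> T"

definition max_attained_twice :: "ereal \<Rightarrow> ereal \<Rightarrow> ereal \<Rightarrow> bool" where
  "max_attained_twice x y z \<longleftrightarrow>
     (let m = max x (max y z) in (x = m \<and> y = m) \<or> (x = m \<and> z = m) \<or> (y = m \<and> z = m))"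

end

theory Submission
  imports Defs
begin

theorem lemma6p3:
  fixes n :: nat and w :: "nat set \<Rightarrow> nat set \<Rightarrow> ereal"
  assumes no_pinf: "\<And>T S. T \<subseteq> {1..n} \<Longrightarrow> S \<subseteq> {1..n} \<Longrightarrow> card T = card S \<Longrightarrow> w T S \<noteq> \<infinity>"
    and prop_i: "\<And>S. S \<subseteq> {1..n} \<Longrightarrow> w {1..card S} S \<noteq> -\<infinity>"
    and prop_ii: "\<And>T S. T \<subseteq> {1..n} \<Longrightarrow> S \<subseteq> {1..n} \<Longrightarrow> card T = card S \<Longrightarrow>
                    gale_less S T \<Longrightarrow> w T S = -\<infinity>"
    and prop_iii: "\<And>a b T S. T \<subseteq> {1..n} \<Longrightarrow> S \<subseteq> {1..n} \<Longrightarrow> card T = card S \<Longrightarrow>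
                    a \<le> b \<Longrightarrow> {a..b} \<subseteq> {1..n} \<Longrightarrow> (\<forall>x\<in>T \<union> S. b < x) \<Longrightarrow>
                    w ({a..b} \<union> T) ({a..b} \<union> S) = (\<Sum>i\<in>{a..b}. w {i} {i}) + w T S"
    and prop_iv: "\<And>T S t s. T \<subseteq> {1..n} \<Longrightarrow> S \<subseteq> {1..n} \<Longrightarrow> card T = card S \<Longrightarrow>
                    t \<in> {1..n} \<Longrightarrow> s \<in> {1..n} \<Longrightarrow> (\<forall>x\<in>S \<union> T. x < t \<and> x < s) \<Longrightarrow>
                    w (insert t T) (insert s S) = w T S + w {t} {s}"
    and prop_v: "\<And>S R a b c d. S \<subseteq> {1..n} \<Longrightarrow> card S \<ge> 2 \<Longrightarrow> R \<subseteq> {1..n} \<Longrightarrow>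
                    card R = card S - 2 \<Longrightarrow> {a, b, c, d} \<subseteq> {1..n} \<Longrightarrow>
                    distinct [a, b, c, d] \<Longrightarrow> {a, b, c, d} \<inter> R = {} \<Longrightarrow>
                    max_attained_twice
                      (w (R \<union> {a, b}) S + w (R \<union> {c, d}) S)
                      (w (R \<union> {a, c}) S + w (R \<union> {b, d}) S)
                      (w (R \<union> {a, d}) S + w (R \<union> {b, c}) S)"
    and submod: "\<And>A B. A \<subseteq> {1..n} \<Longrightarrow> B \<subseteq> {1..n} \<Longrightarrow>
                    w {1..card (A \<inter> B)} (A \<inter> B) + w {1..card (A \<union> B)} (A \<union> B)
                    \<le> w {1..card A} A + w {1..card B} B"
  shows "\<forall>j k. 1 \<le> j \<and> j < n \<and> 1 \<le> k \<and> k \<le> n \<longrightarrow> w {j} {k} \<ge> w {j + 1} {k}"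
proof (intro allI impI)
  fix j k assume jk: "1 \<le> j \<and> j < n \<and> 1 \<le> k \<and> k \<le> n"
  show "w {j} {k} \<ge> w {j + 1} {k}"
  proof (cases "k \<le> j")
    case True
    have "{s. s = k \<and> s \<le> Suc j} = {k}" using True by auto
    then have "gale_less {k} {j+1}" unfolding gale_less_def gale_le_def using True by auto
    then have "w {j+1} {k} = -\<infinity>" using prop_ii[of "{j+1}" "{k}"] jk by auto
    then show ?thesis by simp
  next
    case False
    define P where "P = {1..j-1}"
    define Q where "Q = {1..j}"
    have PQ: "insert j P = Q" using jk unfolding P_def Q_def by auto
    have cP: "card P = j - 1" "card Q = j" unfolding P_def Q_def by auto
    have kP: "k \<notin> P" "k \<notin> Q" using False unfolding P_def Q_def by auto
    have int: "insert k P \<inter> Q = P" using False jk unfolding P_def Q_def by auto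
    have un: "insert k P \<union> Q = insert k Q" using PQ by auto
    have cA: "card (insert k P) = j" using kP cP jk by (simp add: P_def)
    have cU: "card (insert k Q) = j + 1" using kP cP by (simp add: Q_def)
    have sub: "insert k P \<subseteq> {1..n}" "Q \<subseteq> {1..n}" "P \<subseteq> {1..n}"
      using jk unfolding P_def Q_def by auto
    have e1: "{1..card P} = P" using cP P_def by simp
    have e2: "{1..card Q} = Q" using cP Q_def by simp
    have e3: "{1..card (insert k P)} = Q" using cA Q_def by simp
    have e4: "{1..card (insert k Q)} = insert (j+1) Q" using cU Q_def by auto
    have S: "w P P + w (insert (j+1) Q) (insert k Q) \<le> w Q (insert k P) + w Q Q"
      using submod[OF sub(1) sub(2)] unfolding int un e1 e2 e3 e4 .
    have iv1: "w Q (insert k P) = w P P + w {j} {k}"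
      unfolding PQ[symmetric] using jk False sub
      by (intro prop_iv) (auto simp: P_def)
    have iv2: "w (insert (j+1) Q) (insert k Q) = w Q Q + w {j+1} {k}"
      using jk False sub by (intro prop_iv) (auto simp: Q_def)
    have fP: "\<bar>w P P\<bar> \<noteq> \<infinity>" using prop_i[OF sub(3)] no_pinf[OF sub(3) sub(3)] e1 by auto
    have fQ: "\<bar>w Q Q\<bar> \<noteq> \<infinity>" using prop_i[OF sub(2)] no_pinf[OF sub(2) sub(2)] e2 by auto
    have S2: "w P P + (w Q Q + w {j+1} {k}) \<le> (w P P + w {j} {k}) + w Q Q"
      using S iv1 iv2 by simp
    show ?thesis
    proof (cases "w {j+1} {k} = -\<infinity>")
      case True then show ?thesis by simp
    next
      case F2: False
      have "w {j+1} {k} \<noteq> \<infinity>" using no_pinf jk by auto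
      with F2 fP fQ S2 show ?thesis
        by (cases "w P P"; cases "w Q Q"; cases "w {j+1} {k}"; cases "w {j} {k}") auto
    qed
  qed
qed

end
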